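(* Let $M$ be a timelike surface in $\mathbb{R}^{n,1}$ with a canonical null direction with respect to a constant unit spacelike vector $Z$. Then $\langle II(Z^\top,X),Z^\perp\rangle=0$ for every tangent $X$; equivalently $A_{Z^{\perp}}(Z^{\top})=0$. Moreover $\nabla_{Z^{\top}}Z^{\top}=0$.
   Context: $\mathbb{R}^{n,1}$ is $\mathbb{R}^{n+1}$ with the metric $-dx_1^2+dx_2^2+\dots+dx_{n+1}^2$. A surface is timelike if the induced metric has signature $(1,1)$; a vector $v$ is lightlike if $v\ne0$ and $\langle v,v\rangle=0$. For a constant vector $Z$, $Z=Z^\top+Z^\perp$ along $M$ (tangent and normal parts); $M$ has a canonical null direction with respect to $Z$ if $Z^\top$ is lightlike everywhere on $M$. $\nabla$ is the Levi-Civita connection of $M$, $II$ the second fundamental form, $A_\nu$ the shape operator ($\langle A_\nu X,Y\rangle=\langle II(X,Y),\nu\rangle$). *)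

theory Defs
  imports "HOL-Analysis.Analysis"
begin

text \<open>Minkowski space R^{n,1} is modelled as real \<times> real^'n : the first
  component is the time coordinate x_1, the second the space coordinates
  x_2,...,x_{n+1}.\<close>

type_synonym 'n mink = "real \<times> (real ^ 'n)"

definition lor :: "'n::finite mink \<Rightarrow> 'n mink \<Rightarrow> real" where
  "lor v w = - (fst v * fst w) + (snd v \<bullet> snd w)"

definition lightlike :: "'n::finite mink \<Rightarrow> bool" where
  "lightlike v \<longleftrightarrow> v \<noteq> 0 \<and> lor v v = 0"

definition dir :: "nat \<Rightarrow> real \<times> real" where
  "dir i = (if i = 0 then (1, 0) else (0, 1))"

definition pd :: "(real \<times> real \<Rightarrow> 'b::real_normed_vector) \<Rightarrow> nat \<Rightarrow> real \<times> real \<Rightarrow> 'b" where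
  "pd h i u = frechet_derivative h (at u) (dir i)"

fun iterpd :: "(real \<times> real \<Rightarrow> 'b::real_normed_vector) \<Rightarrow> nat list \<Rightarrow> real \<times> real \<Rightarrow> 'b" where
  "iterpd h [] = h"
| "iterpd h (i # is) = pd (iterpd h is) i"

definition smooth_chart :: "(real \<times> real) set \<Rightarrow> (real \<times> real \<Rightarrow> 'b::real_normed_vector) \<Rightarrow> bool" where
  "smooth_chart U h \<longleftrightarrow> (\<forall>is. \<forall>u\<in>U. iterpd h is differentiable (at u))"

definition gm :: "(real \<times> real \<Rightarrow> 'n::finite mink) \<Rightarrow> real \<times> real \<Rightarrow> nat \<Rightarrow> nat \<Rightarrow> real" where
  "gm f u i j = lor (pd f i u) (pd f j u)"

definition detg :: "(real \<times> real \<Rightarrow> 'n::finite mink) \<Rightarrow> real \<times> real \<Rightarrow> real" where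
  "detg f u = gm f u 0 0 * gm f u 1 1 - gm f u 0 1 * gm f u 1 0"

definition ginv :: "(real \<times> real \<Rightarrow> 'n::finite mink) \<Rightarrow> real \<times> real \<Rightarrow> nat \<Rightarrow> nat \<Rightarrow> real" where
  "ginv f u i j =
     (if i = 0 \<and> j = 0 then gm f u 1 1 / detg f u
      else if i = 1 \<and> j = 1 then gm f u 0 0 / detg f u
      else if i = 0 \<and> j = 1 then - gm f u 0 1 / detg f u
      else - gm f u 1 0 / detg f u)"

text \<open>Timelike surface chart: C^\<infinity> parametrization on an open set whose
  induced metric has signature (1,1) (for a symmetric 2x2 matrix: det < 0)
  at every point.\<close>

definition timelike_surface_chart :: "(real \<times> real) set \<Rightarrow> (real \<times> real \<Rightarrow> 'n::finite mink) \<Rightarrow> bool" where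
  "timelike_surface_chart U f \<longleftrightarrow> open U \<and> smooth_chart U f \<and> (\<forall>u\<in>U. detg f u < 0)"

definition tspace :: "(real \<times> real \<Rightarrow> 'n::finite mink) \<Rightarrow> real \<times> real \<Rightarrow> 'n mink set" where
  "tspace f u = span {pd f 0 u, pd f 1 u}"

definition tcoef :: "(real \<times> real \<Rightarrow> 'n::finite mink) \<Rightarrow> real \<times> real \<Rightarrow> 'n mink \<Rightarrow> nat \<Rightarrow> real" where
  "tcoef f u v k = (\<Sum>l<2. ginv f u k l * lor v (pd f l u))"

definition tan_part :: "(real \<times> real \<Rightarrow> 'n::finite mink) \<Rightarrow> real \<times> real \<Rightarrow> 'n mink \<Rightarrow> 'n mink" where
  "tan_part f u v = (\<Sum>k<2. tcoef f u v k *\<^sub>R pd f k u)"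

definition nor_part :: "(real \<times> real \<Rightarrow> 'n::finite mink) \<Rightarrow> real \<times> real \<Rightarrow> 'n mink \<Rightarrow> 'n mink" where
  "nor_part f u v = v - tan_part f u v"

text \<open>Second fundamental form: II(d_i f, d_j f) = (d_i d_j f)^perp, extended bilinearly.\<close>

definition sff :: "(real \<times> real \<Rightarrow> 'n::finite mink) \<Rightarrow> real \<times> real \<Rightarrow> 'n mink \<Rightarrow> 'n mink \<Rightarrow> 'n mink" where
  "sff f u X Y = (\<Sum>i<2. \<Sum>j<2. (tcoef f u X i * tcoef f u Y j) *\<^sub>R nor_part f u (pd (pd f j) i u))"

text \<open>Shape operator: the tangent vector A_nu X with <A_nu X, Y> = <II(X,Y), nu> for all tangent Y.\<close>

definition shape :: "(real \<times> real \<Rightarrow> 'n::finite mink) \<Rightarrow> real \<times> real \<Rightarrow> 'n mink \<Rightarrow> 'n mink \<Rightarrow> 'n mink" where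
  "shape f u \<nu> X = (\<Sum>i<2. \<Sum>j<2. (ginv f u i j * lor (sff f u X (pd f j u)) \<nu>) *\<^sub>R pd f i u)"

definition christoffel :: "(real \<times> real \<Rightarrow> 'n::finite mink) \<Rightarrow> real \<times> real \<Rightarrow> nat \<Rightarrow> nat \<Rightarrow> nat \<Rightarrow> real" where
  "christoffel f u k i j = (1/2) * (\<Sum>l<2. ginv f u k l *
      (pd (\<lambda>w. gm f w j l) i u + pd (\<lambda>w. gm f w i l) j u - pd (\<lambda>w. gm f w i j) l u))"

definition levi_civita :: "(real \<times> real \<Rightarrow> 'n::finite mink) \<Rightarrow> real \<times> real \<Rightarrow> 'n mink
     \<Rightarrow> (real \<times> real \<Rightarrow> 'n mink) \<Rightarrow> 'n mink" where
  "levi_civita f u X V = (\<Sum>k<2.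
      ((\<Sum>i<2. tcoef f u X i * pd (\<lambda>w. tcoef f w (V w) k) i u)
       + (\<Sum>i<2. \<Sum>j<2. christoffel f u k i j * tcoef f u X i * tcoef f u (V u) j)) *\<^sub>R pd f k u)"

end

theory Submission
  imports Defs
begin


lemma line_deriv:
  fixes F :: "'a::real_normed_vector \<Rightarrow> 'b::real_inner"
  assumes "F differentiable (at (a + t *\<^sub>R p))"
  shows "((\<lambda>s. b \<bullet> F (a + s *\<^sub>R p)) has_real_derivative (b \<bullet> frechet_derivative F (at (a + t *\<^sub>R p)) p)) (at t)"
proof -
  let ?D = "frechet_derivative F (at (a + t *\<^sub>R p))"
  have F: "(F has_derivative ?D) (at (a + t *\<^sub>R p))"
    using assms frechet_derivative_works by blast
  have L: "bounded_linear ?D" using F has_derivative_bounded_linear by blast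
  have g: "((\<lambda>s. a + s *\<^sub>R p) has_derivative (\<lambda>s. s *\<^sub>R p)) (at t)"
    by (auto intro!: derivative_eq_intros)
  have c: "((F \<circ> (\<lambda>s. a + s *\<^sub>R p)) has_derivative (?D \<circ> (\<lambda>s. s *\<^sub>R p))) (at t)"
    using diff_chain_at[OF g F] by simp
  have i: "((\<lambda>s. b \<bullet> (F \<circ> (\<lambda>s. a + s *\<^sub>R p)) s) has_derivative (\<lambda>s. b \<bullet> (?D \<circ> (\<lambda>s. s *\<^sub>R p)) s)) (at t)"
    by (rule has_derivative_inner_right[OF c])
  have e: "(\<lambda>s. b \<bullet> (?D \<circ> (\<lambda>s. s *\<^sub>R p)) s) = (*) (b \<bullet> ?D p)"
    by (auto simp: L linear_scale[OF bounded_linear.linear[OF L]] mult.commute)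
  show ?thesis unfolding has_field_derivative_def using i e by (simp add: o_def)
qed

lemma delta_est:
  fixes F :: "real \<times> real \<Rightarrow> 'b::real_inner"
  assumes U: "open U" "u \<in> U" and Fd: "\<forall>w\<in>U. F differentiable (at w)"
    and Kd: "((\<lambda>x. frechet_derivative F (at x) p) has_derivative DK) (at u)"
    and p: "norm p = 1" and q: "norm q = 1" and e: "\<epsilon> > 0"
  shows "\<exists>d>0. \<forall>h. 0 < h \<and> h < d \<longrightarrow>
     \<bar>b \<bullet> (F (u + h *\<^sub>R p + h *\<^sub>R q) - F (u + h *\<^sub>R q) - F (u + h *\<^sub>R p) + F u) - h^2 * (b \<bullet> DK q)\<bar> \<le> \<epsilon> * h^2"
proof -
  let ?K = "\<lambda>x. frechet_derivative F (at x) p"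
  obtain r where r: "r > 0" "ball u r \<subseteq> U" using U open_contains_ball by blast
  define e' where "e' = \<epsilon> / (3 * (norm b + 1))"
  have e': "e' > 0" unfolding e'_def using e by (intro divide_pos_pos mult_pos_pos) (simp_all add: add_nonneg_pos)
  have e'b: "norm b * (3 * e') \<le> \<epsilon>"
  proof -
    have "norm b * (3 * e') = \<epsilon> * (norm b / (norm b + 1))"
    proof -
      have nz: "norm b + 1 \<noteq> 0" using norm_ge_zero[of b] by linarith
      show ?thesis unfolding e'_def using nz by (simp add: field_simps)
    qed
    also have "\<dots> \<le> \<epsilon> * 1" proof (intro mult_left_mono)
      have "0 \<le> norm b" by simp
      then show "norm b / (norm b + 1) \<le> 1" by (smt (verit) divide_le_eq_1)
    qed (use e in auto)
    finally show ?thesis by simp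
  qed
  have L: "bounded_linear DK" using Kd has_derivative_bounded_linear by blast
  obtain d1 where d1: "d1 > 0" "\<forall>y. norm (y - u) < d1 \<longrightarrow> norm (?K y - ?K u - DK (y - u)) \<le> e' * norm (y - u)"
    using Kd e' unfolding has_derivative_at_alt by blast
  define d where "d = min (r/2) (d1/2)"
  have "d > 0" using r d1 by (simp add: d_def)
  moreover have "\<forall>h. 0 < h \<and> h < d \<longrightarrow>
     \<bar>b \<bullet> (F (u + h *\<^sub>R p + h *\<^sub>R q) - F (u + h *\<^sub>R q) - F (u + h *\<^sub>R p) + F u) - h^2 * (b \<bullet> DK q)\<bar> \<le> \<epsilon> * h^2"
  proof (intro allI impI)
    fix h :: real assume h: "0 < h \<and> h < d"
    define \<phi> where "\<phi> = (\<lambda>t. b \<bullet> F ((u + h *\<^sub>R q) + t *\<^sub>R p) - b \<bullet> F (u + t *\<^sub>R p))"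
    have nb: "norm (t *\<^sub>R p + s *\<^sub>R q) \<le> t + s" if "0 \<le> t" "0 \<le> s" for t s
      using norm_triangle_ineq[of "t *\<^sub>R p" "s *\<^sub>R q"] p q that by simp
    have inU: "u + (t *\<^sub>R p + s *\<^sub>R q) \<in> U" if "0 \<le> t" "t \<le> h" "0 \<le> s" "s \<le> h" for t s
    proof -
      have "norm (t *\<^sub>R p + s *\<^sub>R q) < r" using nb[of t s] that h by (simp add: d_def)
      then have "u + (t *\<^sub>R p + s *\<^sub>R q) \<in> ball u r" by (metis add_diff_cancel_left' dist_commute dist_norm mem_ball)
      then show ?thesis using r by blast
    qed
    have der: "(\<phi> has_real_derivative (b \<bullet> (?K ((u + h *\<^sub>R q) + t *\<^sub>R p) - ?K (u + t *\<^sub>R p)))) (at t)"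
      if "0 \<le> t" "t \<le> h" for t
    proof -
      have a1: "F differentiable (at ((u + h *\<^sub>R q) + t *\<^sub>R p))"
        using Fd inU[of t h] that h by (simp add: add_ac)
      have a2: "F differentiable (at (u + t *\<^sub>R p))"
        using Fd inU[of t 0] that h by simp
      show ?thesis unfolding \<phi>_def inner_diff_right
        by (intro DERIV_diff line_deriv a1 a2)
    qed
    obtain \<xi> where xi: "0 < \<xi>" "\<xi> < h"
      "\<phi> h - \<phi> 0 = (h - 0) * (b \<bullet> (?K ((u + h *\<^sub>R q) + \<xi> *\<^sub>R p) - ?K (u + \<xi> *\<^sub>R p)))"
      using MVT2[of 0 h \<phi>, OF _ der] h by auto
    define e1 where "e1 = ?K ((u + h *\<^sub>R q) + \<xi> *\<^sub>R p) - ?K u - DK (\<xi> *\<^sub>R p + h *\<^sub>R q)"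
    define e2 where "e2 = ?K (u + \<xi> *\<^sub>R p) - ?K u - DK (\<xi> *\<^sub>R p)"
    have n1: "norm (\<xi> *\<^sub>R p + h *\<^sub>R q) \<le> 2 * h" using nb[of \<xi> h] xi by simp
    have n2: "norm (\<xi> *\<^sub>R p) \<le> h" using p xi by simp
    have E1: "norm e1 \<le> e' * (2 * h)"
    proof -
      have "norm e1 \<le> e' * norm (\<xi> *\<^sub>R p + h *\<^sub>R q)"
        using d1(2)[rule_format, of "(u + h *\<^sub>R q) + \<xi> *\<^sub>R p"] n1 h
        by (simp add: e1_def d_def add_ac)
      also have "\<dots> \<le> e' * (2 * h)" using n1 e' by (intro mult_left_mono) auto
      finally show ?thesis .
    qed
    have E2: "norm e2 \<le> e' * h"
    proof -
      have "norm e2 \<le> e' * norm (\<xi> *\<^sub>R p)"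
        using d1(2)[rule_format, of "u + \<xi> *\<^sub>R p"] n2 h
        by (simp add: e2_def d_def)
      also have "\<dots> \<le> e' * h" using n2 e' by (intro mult_left_mono) auto
      finally show ?thesis .
    qed
    have kk: "?K ((u + h *\<^sub>R q) + \<xi> *\<^sub>R p) - ?K (u + \<xi> *\<^sub>R p) = h *\<^sub>R DK q + (e1 - e2)"
      unfolding e1_def e2_def
      by (simp add: linear_add[OF bounded_linear.linear[OF L]] linear_scale[OF bounded_linear.linear[OF L]] algebra_simps)
    have phi: "\<phi> h - \<phi> 0 = b \<bullet> (F (u + h *\<^sub>R p + h *\<^sub>R q) - F (u + h *\<^sub>R q) - F (u + h *\<^sub>R p) + F u)"
      unfolding \<phi>_def by (simp add: inner_diff_right inner_add_right add_ac)
    have "b \<bullet> (F (u + h *\<^sub>R p + h *\<^sub>R q) - F (u + h *\<^sub>R q) - F (u + h *\<^sub>R p) + F u) - h^2 * (b \<bullet> DK q)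
        = h * (b \<bullet> (e1 - e2))"
      using xi(3) unfolding phi kk by (simp add: inner_add_right power2_eq_square algebra_simps)
    moreover have "\<bar>b \<bullet> (e1 - e2)\<bar> \<le> norm b * (3 * e' * h)"
    proof -
      have "\<bar>b \<bullet> (e1 - e2)\<bar> \<le> norm b * norm (e1 - e2)" by (rule Cauchy_Schwarz_ineq2)
      also have "norm (e1 - e2) \<le> 3 * e' * h"
        using norm_triangle_ineq4[of e1 e2] E1 E2 by simp
      then have "norm b * norm (e1 - e2) \<le> norm b * (3 * e' * h)" by (intro mult_left_mono) auto
      finally show ?thesis .
    qed
    ultimately have "\<bar>b \<bullet> (F (u + h *\<^sub>R p + h *\<^sub>R q) - F (u + h *\<^sub>R q) - F (u + h *\<^sub>R p) + F u) - h^2 * (b \<bullet> DK q)\<bar>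
        \<le> h * (norm b * (3 * e' * h))"
      using h by (simp add: abs_mult mult_left_mono)
    also have "\<dots> = h^2 * (norm b * (3 * e'))" by (simp add: power2_eq_square algebra_simps)
    also have "\<dots> \<le> h^2 * \<epsilon>" using e'b by (intro mult_left_mono) auto
    finally show "\<bar>b \<bullet> (F (u + h *\<^sub>R p + h *\<^sub>R q) - F (u + h *\<^sub>R q) - F (u + h *\<^sub>R p) + F u) - h^2 * (b \<bullet> DK q)\<bar> \<le> \<epsilon> * h^2"
      by (simp add: mult.commute)
  qed
  ultimately show ?thesis by blast
qed


lemma norm_dir [simp]: "norm (dir i) = 1"
  by (simp add: dir_def)

lemma schwarz:
  fixes F :: "real \<times> real \<Rightarrow> 'b::real_inner"
  assumes U: "open U" "u \<in> U" and Fd: "\<forall>w\<in>U. F differentiable (at w)"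
    and d0: "pd F 0 differentiable (at u)" and d1: "pd F 1 differentiable (at u)"
  shows "pd (pd F 0) 1 u = pd (pd F 1) 0 u"
proof -
  define A where "A = pd (pd F 0) 1 u"
  define B where "B = pd (pd F 1) 0 u"
  have pdF: "pd F i = (\<lambda>x. frechet_derivative F (at x) (dir i))" for i
    by (simp add: pd_def[abs_def])
  have K0: "((\<lambda>x. frechet_derivative F (at x) (dir 0)) has_derivative frechet_derivative (pd F 0) (at u)) (at u)"
    using d0 frechet_derivative_works pdF by metis
  have K1: "((\<lambda>x. frechet_derivative F (at x) (dir 1)) has_derivative frechet_derivative (pd F 1) (at u)) (at u)"
    using d1 frechet_derivative_works pdF by metis
  have Aeq: "A = frechet_derivative (pd F 0) (at u) (dir 1)" by (simp add: A_def pd_def)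
  have Beq: "B = frechet_derivative (pd F 1) (at u) (dir 0)" by (simp add: B_def pd_def)
  have all: "b \<bullet> A = b \<bullet> B" for b
  proof (rule ccontr)
    assume ne: "b \<bullet> A \<noteq> b \<bullet> B"
    define \<epsilon> where "\<epsilon> = \<bar>b \<bullet> A - b \<bullet> B\<bar> / 4"
    have e: "\<epsilon> > 0" using ne by (simp add: \<epsilon>_def)
    obtain da where da: "da > 0" "\<forall>h. 0 < h \<and> h < da \<longrightarrow>
      \<bar>b \<bullet> (F (u + h *\<^sub>R dir 0 + h *\<^sub>R dir 1) - F (u + h *\<^sub>R dir 1) - F (u + h *\<^sub>R dir 0) + F u) - h^2 * (b \<bullet> A)\<bar> \<le> \<epsilon> * h^2"
      using delta_est[OF U Fd K0 norm_dir norm_dir e, where b=b] unfolding Aeq by blast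
    obtain db where db: "db > 0" "\<forall>h. 0 < h \<and> h < db \<longrightarrow>
      \<bar>b \<bullet> (F (u + h *\<^sub>R dir 1 + h *\<^sub>R dir 0) - F (u + h *\<^sub>R dir 0) - F (u + h *\<^sub>R dir 1) + F u) - h^2 * (b \<bullet> B)\<bar> \<le> \<epsilon> * h^2"
      using delta_est[OF U Fd K1 norm_dir norm_dir e, where b=b] unfolding Beq by blast
    define h where "h = min da db / 2"
    have h: "0 < h" "h < da" "h < db" using da db by (auto simp: h_def)
    define \<Delta> where "\<Delta> = b \<bullet> (F (u + h *\<^sub>R dir 0 + h *\<^sub>R dir 1) - F (u + h *\<^sub>R dir 1) - F (u + h *\<^sub>R dir 0) + F u)"
    have D2: "\<Delta> = b \<bullet> (F (u + h *\<^sub>R dir 1 + h *\<^sub>R dir 0) - F (u + h *\<^sub>R dir 0) - F (u + h *\<^sub>R dir 1) + F u)"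
      unfolding \<Delta>_def by (simp add: add_ac diff_add_eq diff_diff_eq)
    have a: "\<bar>\<Delta> - h^2 * (b \<bullet> A)\<bar> \<le> \<epsilon> * h^2" using da h unfolding \<Delta>_def by blast
    have bb: "\<bar>\<Delta> - h^2 * (b \<bullet> B)\<bar> \<le> \<epsilon> * h^2" using db h unfolding D2 by blast
    have "h^2 * \<bar>b \<bullet> A - b \<bullet> B\<bar> = \<bar>(\<Delta> - h^2 * (b \<bullet> B)) - (\<Delta> - h^2 * (b \<bullet> A))\<bar>"
    proof -
      have "(\<Delta> - h^2 * (b \<bullet> B)) - (\<Delta> - h^2 * (b \<bullet> A)) = h^2 * (b \<bullet> A - b \<bullet> B)"
        by (simp add: algebra_simps)
      then show ?thesis by (simp add: abs_mult)
    qed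
    also have "\<dots> \<le> 2 * \<epsilon> * h^2" using a bb by linarith
    also have "\<dots> = h^2 * (\<bar>b \<bullet> A - b \<bullet> B\<bar> / 2)" by (simp add: \<epsilon>_def)
    finally have "\<bar>b \<bullet> A - b \<bullet> B\<bar> \<le> \<bar>b \<bullet> A - b \<bullet> B\<bar> / 2" using h by simp
    then show False using ne by simp
  qed
  have "(A - B) \<bullet> (A - B) = 0" using all[of "A - B"] by (simp add: inner_diff_right)
  then show ?thesis unfolding A_def B_def by simp
qed




lemma lor_sym: "lor v w = lor w v"
  by (simp add: lor_def inner_commute mult.commute)
lemma lor_add_left: "lor (x + y) z = lor x z + lor y z"
  by (simp add: lor_def inner_add_left algebra_simps)
lemma lor_add_right: "lor z (x + y) = lor z x + lor z y"
  by (simp add: lor_def inner_add_right algebra_simps)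
lemma lor_diff_left: "lor (x - y) z = lor x z - lor y z"
  by (simp add: lor_def inner_diff_left algebra_simps)
lemma lor_diff_right: "lor z (x - y) = lor z x - lor z y"
  by (simp add: lor_def inner_diff_right algebra_simps)
lemma lor_scaleR_left: "lor (a *\<^sub>R x) z = a * lor x z"
  by (simp add: lor_def algebra_simps)
lemma lor_scaleR_right: "lor z (a *\<^sub>R x) = a * lor z x"
  by (simp add: lor_def algebra_simps)
lemma lor_zero_left [simp]: "lor 0 z = 0" by (simp add: lor_def)
lemma lor_zero_right [simp]: "lor z 0 = 0" by (simp add: lor_def)
lemmas lor_lin = lor_add_left lor_add_right lor_diff_left lor_diff_right lor_scaleR_left lor_scaleR_right

lemma sum2: "(\<Sum>k<(2::nat). F k) = F 0 + F 1"
  by (simp add: eval_nat_numeral)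

lemma has_derivative_lor:
  assumes "(h1 has_derivative D1) (at u)" "(h2 has_derivative D2) (at u)"
  shows "((\<lambda>w. lor (h1 w) (h2 w)) has_derivative (\<lambda>v. lor (D1 v) (h2 u) + lor (h1 u) (D2 v))) (at u)"
  unfolding lor_def
  by (rule derivative_eq_intros has_derivative_fst has_derivative_snd assms | simp)+ (auto simp: algebra_simps)


lemma pd_eq: "(h has_derivative D) (at u) \<Longrightarrow> pd h i u = D (dir i)"
  unfolding pd_def using frechet_derivative_at by metis

lemma fd: "h differentiable (at u) \<Longrightarrow> (h has_derivative frechet_derivative h (at u)) (at u)"
  using frechet_derivative_works by blast

lemma differentiable_lor:
  "h1 differentiable (at u) \<Longrightarrow> h2 differentiable (at u) \<Longrightarrow> (\<lambda>w. lor (h1 w) (h2 w)) differentiable (at u)"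
  unfolding differentiable_def using has_derivative_lor by blast

lemma pd_lor:
  assumes "h1 differentiable (at u)" "h2 differentiable (at u)"
  shows "pd (\<lambda>w. lor (h1 w) (h2 w)) i u = lor (pd h1 i u) (h2 u) + lor (h1 u) (pd h2 i u)"
  using pd_eq[OF has_derivative_lor[OF fd[OF assms(1)] fd[OF assms(2)]]] by (simp add: pd_def)

lemma pd_scaleR:
  assumes "a differentiable (at u)" "h differentiable (at u)"
  shows "pd (\<lambda>w. a w *\<^sub>R h w) i u = pd a i u *\<^sub>R h u + a u *\<^sub>R pd h i u"
  using pd_eq[OF has_derivative_scaleR[OF fd[OF assms(1)] fd[OF assms(2)]]] by (simp add: pd_def)

lemma pd_mult:
  fixes a b :: "real \<times> real \<Rightarrow> real"
  assumes "a differentiable (at u)" "b differentiable (at u)"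
  shows "pd (\<lambda>w. a w * b w) i u = pd a i u * b u + a u * pd b i u"
  using pd_eq[OF has_derivative_mult[OF fd[OF assms(1)] fd[OF assms(2)]]] by (simp add: pd_def)

lemma pd_add:
  assumes "a differentiable (at u)" "h differentiable (at u)"
  shows "pd (\<lambda>w. a w + h w) i u = pd a i u + pd h i u"
  using pd_eq[OF has_derivative_add[OF fd[OF assms(1)] fd[OF assms(2)]]] by (simp add: pd_def)

lemma pd_diff:
  assumes "a differentiable (at u)" "h differentiable (at u)"
  shows "pd (\<lambda>w. a w - h w) i u = pd a i u - pd h i u"
  using pd_eq[OF has_derivative_diff[OF fd[OF assms(1)] fd[OF assms(2)]]] by (simp add: pd_def)

lemma pd_const: "pd (\<lambda>w. c) i u = 0"
  using pd_eq[OF has_derivative_const[of c "at u"], of i] by simp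

lemma pd_cong_open:
  assumes "open V" "u \<in> V" "\<And>w. w \<in> V \<Longrightarrow> a w = b w"
  shows "pd a i u = pd b i u"
proof -
  have "(a has_derivative f') (at u) \<longleftrightarrow> (b has_derivative f') (at u)" for f'
  proof
    assume "(a has_derivative f') (at u)"
    then show "(b has_derivative f') (at u)"
      by (rule has_derivative_transform_within_open[OF _ assms(1,2)]) (simp add: assms(3))
  next
    assume "(b has_derivative f') (at u)"
    then show "(a has_derivative f') (at u)"
      by (rule has_derivative_transform_within_open[OF _ assms(1,2)]) (simp add: assms(3))
  qed
  then have "frechet_derivative a (at u) = frechet_derivative b (at u)"
    unfolding frechet_derivative_def by simp
  then show ?thesis by (simp add: pd_def)
qed

lemma pd_nz: "i \<noteq> 0 \<Longrightarrow> pd h i = pd h 1"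
  by (simp add: pd_def[abs_def] dir_def)




lemma gm_sym: "gm f w i j = gm f w j i"
  by (simp add: gm_def lor_sym)

lemma ginv_gm:
  assumes "detg f w \<noteq> 0" "k < 2" "m < 2"
  shows "(\<Sum>l<2. ginv f w k l * gm f w m l) = (if k = m then 1 else 0)"
proof -
  have s: "gm f w (Suc 0) 0 = gm f w 0 (Suc 0)" by (rule gm_sym)
  have d: "gm f w 0 0 * gm f w 1 1 - gm f w 0 1 * gm f w 0 1 \<noteq> 0"
    using assms(1) by (simp add: detg_def s[simplified])
  have "k = 0 \<or> k = 1" "m = 0 \<or> m = 1" using assms by auto
  moreover have "\<And>a b c :: real. a * c - b * b \<noteq> 0 \<Longrightarrow>
      c / (a * c - b * b) * a + - b / (a * c - b * b) * b = 1 \<and>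
      c / (a * c - b * b) * b + - b / (a * c - b * b) * c = 0 \<and>
      - b / (a * c - b * b) * a + a / (a * c - b * b) * b = 0 \<and>
      - b / (a * c - b * b) * b + a / (a * c - b * b) * c = 1"
    by (simp add: divide_simps)
  ultimately show ?thesis using d
    by (auto simp: sum2 ginv_def detg_def s)
qed

lemma ginv_zero: "detg f w = 0 \<Longrightarrow> ginv f w k l = 0"
  by (simp add: ginv_def)

lemma tcoef_comb:
  assumes "detg f w \<noteq> 0" "m < 2"
  shows "tcoef f w (\<Sum>k<2. t k *\<^sub>R pd f k w) m = t m"
proof -
  have "tcoef f w (\<Sum>k<2. t k *\<^sub>R pd f k w) m
      = (\<Sum>l<2. ginv f w m l * (t 0 * gm f w 0 l + t 1 * gm f w 1 l))"
    by (simp add: tcoef_def sum2 lor_lin gm_def)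
  also have "\<dots> = t 0 * (\<Sum>l<2. ginv f w m l * gm f w 0 l) + t 1 * (\<Sum>l<2. ginv f w m l * gm f w 1 l)"
    by (simp add: sum2 algebra_simps)
  also have "\<dots> = t m"
    using ginv_gm[OF assms(1) assms(2), of 0] ginv_gm[OF assms(1) assms(2), of 1] assms(2)
    by (auto simp: less_2_cases_iff)
  finally show ?thesis .
qed

lemma tcoef_tan:
  assumes "m < 2"
  shows "tcoef f w (tan_part f w v) m = tcoef f w v m"
proof (cases "detg f w = 0")
  case True then show ?thesis by (simp add: tcoef_def ginv_zero)
next
  case False then show ?thesis unfolding tan_part_def by (rule tcoef_comb[OF _ assms])
qed

lemma proj_orth:
  assumes "detg f w \<noteq> 0" "l < 2"
  shows "lor (nor_part f w v) (pd f l w) = 0"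
proof -
  let ?a = "\<lambda>p. lor v (pd f p w)"
  have "lor (nor_part f w v) (pd f l w) = ?a l - (\<Sum>k<2. tcoef f w v k * gm f w k l)"
    by (simp add: nor_part_def tan_part_def sum2 lor_lin gm_def)
  also have "(\<Sum>k<2. tcoef f w v k * gm f w k l) = (\<Sum>p<2. ?a p * (\<Sum>k<2. ginv f w k p * gm f w l k))"
    by (simp add: tcoef_def sum2 algebra_simps gm_sym[of f w l])
  also have "\<dots> = ?a l"
  proof -
    have g: "ginv f w k p = ginv f w p k" if "k < 2" "p < 2" for k p
      using that by (auto simp: ginv_def gm_sym[of f w "Suc 0" 0] less_2_cases_iff)
    have "(\<Sum>p<2. ?a p * (\<Sum>k<2. ginv f w k p * gm f w l k)) = (\<Sum>p<2. ?a p * (\<Sum>k<2. ginv f w p k * gm f w l k))"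
      by (simp add: sum2 g)
    also have "\<dots> = (\<Sum>p<2. ?a p * (if p = l then 1 else 0))"
      using ginv_gm[OF assms(1) _ assms(2)] by (simp add: sum2)
    also have "\<dots> = ?a l" using assms(2) by (auto simp: sum2 less_2_cases_iff)
    finally show ?thesis .
  qed
  finally show ?thesis by simp
qed




lemma diff_gm:
  "pd f i differentiable (at u) \<Longrightarrow> pd f j differentiable (at u) \<Longrightarrow> (\<lambda>w. gm f w i j) differentiable (at u)"
  unfolding gm_def by (rule differentiable_lor)

lemma diff_detg:
  assumes "\<And>k. pd f k differentiable (at u)"
  shows "(\<lambda>w. detg f w) differentiable (at u)"
  unfolding detg_def using assms by (intro differentiable_diff differentiable_mult diff_gm)

lemma diff_ginv:
  assumes "\<And>k. pd f k differentiable (at u)" "detg f u \<noteq> 0"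
  shows "(\<lambda>w. ginv f w k l) differentiable (at u)"
proof -
  have g: "(\<lambda>w. gm f w i j) differentiable (at u)" for i j by (rule diff_gm[OF assms(1) assms(1)])
  have d: "(\<lambda>w. detg f w) differentiable (at u)" using assms(1) by (rule diff_detg)
  have q: "(\<lambda>w. gm f w i j / detg f w) differentiable (at u)" for i j
    using g d assms(2) by (rule differentiable_divide)
  have q': "(\<lambda>w. - gm f w i j / detg f w) differentiable (at u)" for i j
    using q[of i j] by (simp add: differentiable_minus)
  have "(\<lambda>w. ginv f w k l) = (if k = 0 \<and> l = 0 then (\<lambda>w. gm f w 1 1 / detg f w)
      else if k = 1 \<and> l = 1 then (\<lambda>w. gm f w 0 0 / detg f w)
      else if k = 0 \<and> l = 1 then (\<lambda>w. - gm f w 0 1 / detg f w)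
      else (\<lambda>w. - gm f w 1 0 / detg f w))"
    by (rule ext) (simp add: ginv_def)
  then show ?thesis by (simp add: q q')
qed

lemma diff_tcoef:
  assumes "\<And>k. pd f k differentiable (at u)" "detg f u \<noteq> 0"
  shows "(\<lambda>w. tcoef f w Z k) differentiable (at u)"
  unfolding tcoef_def
  by (intro differentiable_sum finite_lessThan ballI differentiable_mult diff_ginv assms differentiable_lor differentiable_const)

lemma diff_tan:
  assumes "\<And>k. pd f k differentiable (at u)" "detg f u \<noteq> 0"
  shows "(\<lambda>w. tan_part f w Z) differentiable (at u)"
  unfolding tan_part_def
  by (intro differentiable_sum finite_lessThan ballI differentiable_scaleR diff_tcoef assms)

lemma S_sym:
  fixes f :: "real \<times> real \<Rightarrow> 'b::real_inner"
  assumes "open U" "u \<in> U" "\<forall>w\<in>U. f differentiable (at w)"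
    "pd f 0 differentiable (at u)" "pd f 1 differentiable (at u)"
  shows "pd (pd f i) j u = pd (pd f j) i u"
proof -
  have s: "pd (pd f 0) 1 u = pd (pd f 1) 0 u" by (rule schwarz[OF assms])
  have s1: "pd (pd f 0) (Suc 0) u = pd (pd f (Suc 0)) 0 u" using s by simp
  have r: "k \<noteq> 0 \<Longrightarrow> pd h k = pd h 1" for h :: "real \<times> real \<Rightarrow> 'b" and k
    using pd_nz[of k h] by simp
  show ?thesis
  proof (cases "i = 0")
    case True
    then show ?thesis
      by (cases "j = 0") (simp_all add: r[of j] s1)
  next
    case False
    then show ?thesis
      by (cases "j = 0") (simp_all add: r[of j] r[of i] s1)
  qed
qed

lemma tan_nor_orth:
  assumes "detg f w \<noteq> 0"
  shows "lor (tan_part f w v) (nor_part f w Z) = 0"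
  using proj_orth[OF assms, of 0 Z] proj_orth[OF assms, of 1 Z]
  by (simp add: tan_part_def sum2 lor_lin lor_sym[of "pd f _ w"])




theorem mainTheorem2:
  fixes U :: "(real \<times> real) set" and f :: "real \<times> real \<Rightarrow> 'n::finite mink" and Z :: "'n mink"
  assumes surf: "timelike_surface_chart U f"
    and unit: "lor Z Z = 1"
    and null: "\<forall>u\<in>U. lightlike (tan_part f u Z)"
  shows "\<forall>u\<in>U.
           (\<forall>X\<in>tspace f u. lor (sff f u (tan_part f u Z) X) (nor_part f u Z) = 0)
         \<and> shape f u (nor_part f u Z) (tan_part f u Z) = 0
         \<and> levi_civita f u (tan_part f u Z) (\<lambda>w. tan_part f w Z) = 0"
proof
  fix u assume u: "u \<in> U"
  have opn: "open U" and sm: "smooth_chart U f" and dt: "\<forall>w\<in>U. detg f w < 0"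
    using surf by (auto simp: timelike_surface_chart_def)
  have dnz: "detg f w \<noteq> 0" if "w \<in> U" for w using dt that by force
  have Df: "\<forall>w\<in>U. f differentiable (at w)"
    using sm unfolding smooth_chart_def by (metis iterpd.simps(1))
  have Dfk: "pd f k differentiable (at w)" if "w \<in> U" for k w
    using sm that unfolding smooth_chart_def by (metis iterpd.simps)
  define c where "c = (\<lambda>k w. tcoef f w Z k)"
  define T where "T = (\<lambda>w. tan_part f w Z)"
  define N where "N = nor_part f u Z"
  define S where "S = (\<lambda>i j. pd (pd f j) i u)"
  have Ssym: "S i j = S j i" for i j
    unfolding S_def by (rule S_sym[OF opn u Df Dfk[OF u] Dfk[OF u]])
  have Dc: "c k differentiable (at u)" for k
    unfolding c_def using diff_tcoef[OF Dfk[OF u] dnz[OF u]] by simp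
  have DT: "T differentiable (at u)"
    unfolding T_def using diff_tan[OF Dfk[OF u] dnz[OF u]] by simp
  have Tsum: "T = (\<lambda>w. c 0 w *\<^sub>R pd f 0 w + c 1 w *\<^sub>R pd f 1 w)"
    by (rule ext) (simp add: T_def c_def tan_part_def sum2)
  have NZ: "N = Z - T u" by (simp add: N_def T_def nor_part_def)
  have pdT: "pd T j u = (\<Sum>k<2. pd (c k) j u *\<^sub>R pd f k u + c k u *\<^sub>R S j k)" for j
    unfolding Tsum S_def
    by (simp add: pd_add pd_scaleR Dc Dfk[OF u] differentiable_scaleR sum2 algebra_simps)
  have TT0: "lor (T w) (T w) = 0" if "w \<in> U" for w
    using null that by (simp add: T_def lightlike_def)
  have TN0: "lor (T w) (nor_part f w Z) = 0" if "w \<in> U" for w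
    unfolding T_def by (rule tan_nor_orth[OF dnz[OF that]])
  have TZ0: "lor (T w) Z = 0" if "w \<in> U" for w
  proof -
    have "Z = T w + nor_part f w Z" by (simp add: T_def nor_part_def)
    then have "lor (T w) Z = lor (T w) (T w) + lor (T w) (nor_part f w Z)"
      by (metis lor_add_right)
    then show ?thesis using TT0[OF that] TN0[OF that] by simp
  qed
  have dTT: "lor (pd T j u) (T u) = 0" for j
  proof -
    have "pd (\<lambda>w. lor (T w) (T w)) j u = pd (\<lambda>w. 0::real) j u"
      by (rule pd_cong_open[OF opn u]) (simp add: TT0)
    then have "lor (pd T j u) (T u) + lor (T u) (pd T j u) = 0"
      using pd_lor[OF DT DT] pd_const by metis
    then show ?thesis by (simp add: lor_sym[of "T u"])
  qed
  have dTZ: "lor (pd T j u) Z = 0" for j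
  proof -
    have "pd (\<lambda>w. lor (T w) Z) j u = pd (\<lambda>w. 0::real) j u"
      by (rule pd_cong_open[OF opn u]) (simp add: TZ0)
    then show ?thesis
      using pd_lor[OF DT differentiable_const, of Z j] pd_const[of Z j u] pd_const[of "0::real" j u] by simp
  qed
  have fN: "lor (pd f k u) N = 0" if "k < 2" for k
    using proj_orth[OF dnz[OF u] that, of Z] by (simp add: N_def lor_sym)
  have core: "(\<Sum>i<2. c i u * lor (S i j) N) = 0" for j
  proof -
    have "(\<Sum>i<2. c i u * lor (S i j) N) = lor (\<Sum>k<2. c k u *\<^sub>R S j k) N"
      by (simp add: sum2 lor_lin Ssym[of j])
    also have "(\<Sum>k<2. c k u *\<^sub>R S j k) = pd T j u - (\<Sum>k<2. pd (c k) j u *\<^sub>R pd f k u)"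
      by (simp add: pdT sum2 algebra_simps)
    also have "lor \<dots> N = lor (pd T j u) N"
      using fN[of 0] fN[of 1] by (simp add: sum2 lor_lin)
    also have "\<dots> = 0" using dTT dTZ by (simp add: NZ lor_lin)
    finally show ?thesis .
  qed
  have tcT: "tcoef f u (T u) i = c i u" if "i < 2" for i
    using tcoef_tan[OF that] by (simp add: T_def c_def)
  have norN: "lor (nor_part f u v) N = lor v N" for v
  proof -
    have "lor (tan_part f u v) N = 0" unfolding N_def by (rule tan_nor_orth[OF dnz[OF u]])
    then show ?thesis by (simp add: nor_part_def lor_lin)
  qed
  have cl1: "lor (sff f u (T u) X) N = 0" for X
  proof -
    have "lor (sff f u (T u) X) N
        = (\<Sum>i<2. \<Sum>j<2. (tcoef f u (T u) i * tcoef f u X j) * lor (nor_part f u (pd (pd f j) i u)) N)"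
      unfolding sff_def by (simp add: sum2 lor_lin)
    also have "\<dots> = (\<Sum>i<2. \<Sum>j<2. (c i u * tcoef f u X j) * lor (S i j) N)"
      by (simp add: sum2 tcT norN S_def)
    also have "\<dots> = tcoef f u X 0 * (\<Sum>i<2. c i u * lor (S i 0) N) + tcoef f u X 1 * (\<Sum>i<2. c i u * lor (S i 1) N)"
      by (simp add: sum2 algebra_simps)
    finally have "lor (sff f u (T u) X) N
        = tcoef f u X 0 * (\<Sum>i<2. c i u * lor (S i 0) N) + tcoef f u X 1 * (\<Sum>i<2. c i u * lor (S i 1) N)" .
    then show ?thesis using core[of 0] core[of 1] by simp
  qed
  have cl2: "shape f u N (T u) = 0"
    unfolding shape_def using cl1 by simp
  have christ: "christoffel f u k i j = (\<Sum>l<2. ginv f u k l * lor (S i j) (pd f l u))" for k i j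
  proof -
    have pg: "pd (\<lambda>w. gm f w a b) d u = lor (S d a) (pd f b u) + lor (pd f a u) (S d b)" for a b d
      unfolding gm_def S_def by (rule pd_lor[OF Dfk[OF u] Dfk[OF u]])
    have one: "pd (\<lambda>w. gm f w j l) i u + pd (\<lambda>w. gm f w i l) j u - pd (\<lambda>w. gm f w i j) l u
        = 2 * lor (S i j) (pd f l u)" for l
    proof -
      have a: "S j i = S i j" "S l i = S i l" "S l j = S j l" by (rule Ssym)+
      have b: "lor (pd f j u) (S i l) = lor (S i l) (pd f j u)" "lor (pd f i u) (S j l) = lor (S j l) (pd f i u)"
        by (rule lor_sym)+
      show ?thesis unfolding pg a b by simp
    qed
    show ?thesis unfolding christoffel_def one
      by (simp add: sum_distrib_left)
  qed
  have Tf: "lor (pd T i u) (pd f l u) = lor N (S i l)" if "l < 2" for i l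
  proof -
    have "pd (\<lambda>w. lor (T w) (pd f l w)) i u = pd (\<lambda>w. lor Z (pd f l w)) i u"
    proof (rule pd_cong_open[OF opn u])
      fix w assume w: "w \<in> U"
      have "lor (nor_part f w Z) (pd f l w) = 0" by (rule proj_orth[OF dnz[OF w] that])
      then show "lor (T w) (pd f l w) = lor Z (pd f l w)"
        by (simp add: T_def nor_part_def lor_lin)
    qed
    then have "lor (pd T i u) (pd f l u) + lor (T u) (S i l) = lor 0 (pd f l u) + lor Z (S i l)"
      using pd_lor[OF DT Dfk[where k=l, OF u], where i=i] pd_lor[OF differentiable_const[of Z] Dfk[where k=l, OF u], where i=i] pd_const[of Z i u]
      by (simp add: S_def)
    then show ?thesis by (simp add: NZ lor_lin)
  qed
  have V0: "(\<Sum>i<2. c i u * lor (pd T i u) (pd f l u)) = 0" if "l < 2" for l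
    using core[of l] Tf[OF that] by (simp add: lor_sym[of N])
  have Vexp: "lor (pd T i u) (pd f l u) = (\<Sum>m<2. pd (c m) i u * gm f u m l + c m u * lor (S i m) (pd f l u))" for i l
    by (simp add: pdT sum2 lor_lin gm_def)
  have coef: "(\<Sum>i<2. tcoef f u (T u) i * pd (\<lambda>w. tcoef f w (T w) k) i u)
      + (\<Sum>i<2. \<Sum>j<2. christoffel f u k i j * tcoef f u (T u) i * tcoef f u (T u) j) = 0"
    if "k < 2" for k
  proof -
    have e1: "(\<lambda>w. tcoef f w (T w) k) = c k"
      by (rule ext) (simp add: T_def c_def tcoef_tan[OF that])
    have gg: "(\<Sum>l<2. ginv f u k l * gm f u m l) = (if k = m then 1 else 0)" if "m < 2" for m
      by (rule ginv_gm[OF dnz[OF u] \<open>k < 2\<close> that])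
    have "(\<Sum>l<2. ginv f u k l * (\<Sum>i<2. c i u * lor (pd T i u) (pd f l u))) = 0"
      using V0 by (simp add: sum2)
    moreover have "(\<Sum>l<2. ginv f u k l * (\<Sum>i<2. c i u * lor (pd T i u) (pd f l u)))
      = (\<Sum>i<2. c i u * (\<Sum>m<2. pd (c m) i u * (\<Sum>l<2. ginv f u k l * gm f u m l)))
        + (\<Sum>i<2. \<Sum>j<2. (\<Sum>l<2. ginv f u k l * lor (S i j) (pd f l u)) * c i u * c j u)"
      unfolding Vexp by (simp add: sum2 algebra_simps)
    moreover have "(\<Sum>i<2. c i u * (\<Sum>m<2. pd (c m) i u * (\<Sum>l<2. ginv f u k l * gm f u m l)))
       = (\<Sum>i<2. c i u * pd (c k) i u)"
    proof -
      have "(\<Sum>i<2. c i u * (\<Sum>m<2. pd (c m) i u * (\<Sum>l<2. ginv f u k l * gm f u m l)))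
          = (\<Sum>i<2. c i u * (\<Sum>m<2. pd (c m) i u * (if k = m then 1 else 0)))"
        by (intro sum.cong refl arg_cong2[where f="(*)"]) (simp add: gg)
      also have "\<dots> = (\<Sum>i<2. c i u * pd (c k) i u)"
        using that by (auto simp: sum2 less_2_cases_iff)
      finally show ?thesis .
    qed
    ultimately show ?thesis
      unfolding e1 christ using tcT by (simp add: sum2)
  qed
  have cl3: "levi_civita f u (T u) T = 0"
    unfolding levi_civita_def using coef by (simp add: sum2)
  show "(\<forall>X\<in>tspace f u. lor (sff f u (tan_part f u Z) X) (nor_part f u Z) = 0)
         \<and> shape f u (nor_part f u Z) (tan_part f u Z) = 0
         \<and> levi_civita f u (tan_part f u Z) (\<lambda>w. tan_part f w Z) = 0"
    using cl1 cl2 cl3 unfolding T_def N_def by simp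
qed


end
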